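(* Let $f$ be as in the following setting: $f(x)=\prod_{j=1}^N(a_jx+b_j)^{d_j}$ with $N\ge1$, $a_j,b_j,d_j$ positive integers, and let $M_n:=\max_{1\le j\le N}\sqrt{a_jn+b_j}$. Then, as $n\to\infty$, $$\sum_{p\le M_n} v_p\big(\operatorname{lcm}(f(1),\dots,f(n))\big)\log p=O(\sqrt n),$$ where the sum runs over primes $p\le M_n$.
   Context: $v_p(a)$ denotes the exponent of the prime $p$ in the positive integer $a$. *)

theory Defs
  imports "HOL-Analysis.Analysis" "HOL-Computational_Algebra.Primes" "HOL-Library.Landau_Symbols"
begin

definition polyf :: "nat \<Rightarrow> (nat \<Rightarrow> nat) \<Rightarrow> (nat \<Rightarrow> nat) \<Rightarrow> (nat \<Rightarrow> nat) \<Rightarrow> nat \<Rightarrow> nat" where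
  "polyf N a b d x = (\<Prod>j=1..N. (a j * x + b j) ^ d j)"

definition Mn :: "nat \<Rightarrow> (nat \<Rightarrow> nat) \<Rightarrow> (nat \<Rightarrow> nat) \<Rightarrow> nat \<Rightarrow> real" where
  "Mn N a b n = Max ((\<lambda>j. sqrt (real (a j * n + b j))) ` {1..N})"

end

theory Submission
  imports Defs
begin



lemma binom_odd_le: "(2*m+1) choose m \<le> (4::nat)^m"
proof -
  have s: "(2*m+1) choose (m+1) = (2*m+1) choose m"
    using binomial_symmetric[of m "2*m+1"] by simp
  have "((2*m+1) choose m) + ((2*m+1) choose (m+1)) = (\<Sum>k\<in>{m, m+1}. (2*m+1) choose k)"
    by simp
  also have "\<dots> \<le> (\<Sum>k\<le>2*m+1. (2*m+1) choose k)"
    by (intro sum_mono2) auto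
  also have "\<dots> = 2^(2*m+1)" by (rule choose_row_sum)
  finally have "2 * ((2*m+1) choose m) \<le> 2 * 4^m"
    using s by (simp add: power_add power_mult)
  then show ?thesis by simp
qed


lemma prod_primes_dvd:
  fixes x :: nat
  assumes "finite F" "\<And>p. p \<in> F \<Longrightarrow> prime p \<and> p dvd x"
  shows "\<Prod>F dvd x"
  using assms
proof (induction F rule: finite_induct)
  case empty then show ?case by simp
next
  case (insert p F)
  have "coprime p (\<Prod>F)"
  proof (rule prime_imp_coprime)
    show "prime p" using insert by simp
    show "\<not> p dvd \<Prod>F"
    proof
      assume "p dvd \<Prod>F"
      then obtain q where "q \<in> F" "p dvd q"
        using insert by (auto simp: prime_dvd_prod_iff)
      then have "p = q" using insert by (simp add: primes_dvd_imp_eq)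
      then show False using insert \<open>q \<in> F\<close> by simp
    qed
  qed
  then show ?case using insert by (simp add: divides_mult)
qed


lemma primorial_le: "(\<Prod>{p::nat. prime p \<and> p \<le> n}) \<le> 4^n"
proof (induction n rule: less_induct)
  case (less n)
  show ?case
  proof (cases "n \<le> 2")
    case True
    have sub: "{p::nat. prime p \<and> p \<le> n} \<subseteq> {2}"
    proof
      fix p assume "p \<in> {p::nat. prime p \<and> p \<le> n}"
      then have "2 \<le> p" "p \<le> n" using prime_ge_2_nat by auto
      then show "p \<in> {2}" using True by simp
    qed
    show ?thesis
    proof (cases "n < 2")
      case True
      then have e: "{p::nat. prime p \<and> p \<le> n} = {}" using sub by auto
      show ?thesis by (subst e) simp
    next
      case False
      then have "n = 2" using \<open>n \<le> 2\<close> by simp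
      then have e: "{p::nat. prime p \<and> p \<le> n} = {2}" using sub by auto
      show ?thesis using \<open>n = 2\<close> by (subst e) simp
    qed
  next
    case False
    show ?thesis
    proof (cases "even n")
      case True
      have "\<not> prime n" proof
        assume "prime n"
        moreover have "n > 2" using False by simp
        ultimately have "odd n" by (rule prime_odd_nat)
        then show False using True by simp
      qed
      then have "{p::nat. prime p \<and> p \<le> n} = {p. prime p \<and> p \<le> n - 1}"
      proof (intro Collect_cong iffI conjI)
        fix p assume "prime p \<and> p \<le> n"
        then show "p \<le> n - 1" using \<open>\<not> prime n\<close> by (cases "p = n") auto
      qed auto
      also have "\<Prod>\<dots> \<le> 4^(n-1)" using less False by simp
      also have "\<dots> \<le> 4^n" by (intro power_increasing) auto
      finally show ?thesis .
    next
      case odd: False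
      then obtain m where n: "n = 2*m+1" by (metis oddE)
      define Q where "Q = {p::nat. prime p \<and> m+1 < p \<and> p \<le> 2*m+1}"
      have split: "{p::nat. prime p \<and> p \<le> n} = {p. prime p \<and> p \<le> m+1} \<union> Q"
        unfolding Q_def n by auto
      have fin: "finite {p::nat. prime p \<and> p \<le> m+1}" "finite Q" unfolding Q_def by auto
      have disj: "{p::nat. prime p \<and> p \<le> m+1} \<inter> Q = {}" unfolding Q_def by auto
      have "\<Prod>Q dvd ((2*m+1) choose m)"
      proof (rule prod_primes_dvd[OF fin(2)])
        fix p assume p: "p \<in> Q"
        then have pp: "prime p" and pl: "m+1 < p" "p \<le> 2*m+1" unfolding Q_def by auto
        have eq: "fact m * fact (m+1) * ((2*m+1) choose m) = (fact (2*m+1) :: nat)"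
          using binomial_fact_lemma[of m "2*m+1"] by (simp add: mult_2)
        have "p dvd fact (2*m+1)" using pp pl by (simp only: prime_dvd_fact_iff)
        then have "p dvd fact m * fact (m+1) * ((2*m+1) choose m)" using eq by simp
        moreover have "\<not> p dvd fact m" "\<not> p dvd fact (m+1)"
          using pp pl prime_dvd_fact_iff[OF pp, of m] prime_dvd_fact_iff[OF pp, of "m+1"] by auto
        ultimately have "p dvd ((2*m+1) choose m)"
          using pp by (simp add: prime_dvd_mult_iff)
        then show "prime p \<and> p dvd ((2*m+1) choose m)" using pp by simp
      qed
      then have "\<Prod>Q \<le> (2*m+1) choose m"
        by (intro dvd_imp_le) (auto simp: binomial_eq_0_iff)
      also have "\<dots> \<le> 4^m" by (rule binom_odd_le)
      finally have qb: "\<Prod>Q \<le> 4^m" .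
      have "\<Prod>{p::nat. prime p \<and> p \<le> n} = \<Prod>{p. prime p \<and> p \<le> m+1} * \<Prod>Q"
        unfolding split using fin disj by (rule prod.union_disjoint)
      also have "\<dots> \<le> 4^(m+1) * 4^m"
        using less[of "m+1"] qb False n by (intro mult_mono) auto
      also have "\<dots> = 4^n" by (simp add: n power_add[symmetric])
      finally show ?thesis .
    qed
  qed
qed


lemma mult_Lcm_le:
  fixes S :: "nat set"
  assumes "finite S" "0 \<notin> S" "prime p" "\<And>s. s \<in> S \<Longrightarrow> multiplicity p s \<le> e"
  shows "multiplicity p (Lcm S) \<le> e"
proof (cases "S = {}")
  case True then show ?thesis by simp
next
  case False
  have L0: "Lcm S \<noteq> 0" using assms by (simp add: Lcm_0_iff)
  have bdd: "subset_mset.bdd_above (prime_factorization ` S)"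
    using assms(1) by (intro subset_mset.bdd_above_finite) auto
  have "multiplicity p (Lcm S) = count (prime_factorization (Lcm S)) p"
    using assms(3) by (simp add: count_prime_factorization_prime)
  also have "\<dots> = (SUP X\<in>prime_factorization ` S. count X p)"
    using L0 False bdd by (simp add: prime_factorization_Lcm count_Sup_multiset_nonempty)
  also have "\<dots> \<le> e"
  proof (rule cSUP_least)
    show "prime_factorization ` S \<noteq> {}" using False by simp
    fix X assume "X \<in> prime_factorization ` S"
    then obtain s where "s \<in> S" "X = prime_factorization s" by auto
    then show "count X p \<le> e" using assms(3,4) by (simp add: count_prime_factorization_prime)
  qed
  finally show ?thesis .
qed


lemma theta_le: "(\<Sum>p\<in>{p::nat. prime p \<and> p \<le> n}. ln (real p)) \<le> real n * ln 4"
proof -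
  have "(\<Sum>p\<in>{p::nat. prime p \<and> p \<le> n}. ln (real p)) = ln (\<Prod>p\<in>{p::nat. prime p \<and> p \<le> n}. real p)"
    by (subst ln_prod) (auto dest: prime_gt_0_nat)
  also have "(\<Prod>p\<in>{p::nat. prime p \<and> p \<le> n}. real p) = real (\<Prod>{p::nat. prime p \<and> p \<le> n})"
    by simp
  also have "ln \<dots> \<le> ln (real (4^n))"
  proof -
    have pos: "0 < \<Prod>{p::nat. prime p \<and> p \<le> n}"
      by (intro prod_pos) (auto dest: prime_gt_0_nat)
    have le: "real (\<Prod>{p::nat. prime p \<and> p \<le> n}) \<le> real (4^n)"
      using primorial_le[of n] by (simp only: of_nat_le_iff)
    have pos': "0 < real (\<Prod>{p::nat. prime p \<and> p \<le> n})" using pos by (simp only: of_nat_0_less_iff)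
    show ?thesis using pos' le by (metis ln_le_cancel_iff less_le_trans)
  qed
  also have "\<dots> = real n * ln 4" by (simp add: ln_realpow)
  finally show ?thesis .
qed


lemma factor_bound:
  fixes m X p :: nat
  assumes "prime p" "0 < m" "m \<le> X"
  shows "real (multiplicity p m) * ln (real p) \<le> ln (real X)"
    and "X < p^4 \<Longrightarrow> multiplicity p m \<le> 3"
proof -
  have "p ^ multiplicity p m dvd m" by (rule multiplicity_dvd)
  then have pv: "p ^ multiplicity p m \<le> X" using assms dvd_imp_le le_trans by blast
  have p0: "0 < p" using assms prime_gt_0_nat by blast
  have "real (multiplicity p m) * ln (real p) = ln (real (p ^ multiplicity p m))"
    using p0 by (simp add: ln_realpow)
  also have "\<dots> \<le> ln (real X)"
    using pv p0 assms(2,3) by (subst ln_le_cancel_iff) auto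
  finally show "real (multiplicity p m) * ln (real p) \<le> ln (real X)" .
  assume X: "X < p^4"
  show "multiplicity p m \<le> 3"
  proof (rule ccontr)
    assume "\<not> multiplicity p m \<le> 3"
    then have "p^4 \<le> p ^ multiplicity p m"
      using p0 by (intro power_increasing) auto
    then show False using pv X by simp
  qed
qed


lemma polyf_mult:
  assumes "prime p" "\<forall>j\<in>{1..N}. b j > 0"
  shows "multiplicity p (polyf N a b d k) = (\<Sum>j=1..N. d j * multiplicity p (a j * k + b j))"
proof -
  have "multiplicity p (polyf N a b d k) = (\<Sum>j=1..N. multiplicity p ((a j * k + b j) ^ d j))"
    unfolding polyf_def using assms
    by (intro prime_elem_multiplicity_prod_distrib) auto
  also have "\<dots> = (\<Sum>j=1..N. d j * multiplicity p (a j * k + b j))"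
    using assms by (intro sum.cong refl prime_elem_multiplicity_power_distrib) auto
  finally show ?thesis .
qed


lemma polyf_bound:
  fixes X :: nat
  assumes "prime p" "\<forall>j\<in>{1..N}. b j > 0" "k \<le> n"
    and X: "X = (\<Sum>j=1..N. a j) * n + (\<Sum>j=1..N. b j)"
  shows "real (multiplicity p (polyf N a b d k)) * ln (real p) \<le> real (\<Sum>j=1..N. d j) * ln (real X)"
    and "X < p^4 \<Longrightarrow> multiplicity p (polyf N a b d k) \<le> 3 * (\<Sum>j=1..N. d j)"
proof -
  have le: "a j * k + b j \<le> X" if "j \<in> {1..N}" for j
  proof -
    have "a j * k \<le> a j * n" using assms by simp
    also have "a j * n \<le> (\<Sum>j=1..N. a j) * n"
      using that by (intro mult_right_mono member_le_sum) auto
    finally show ?thesis unfolding X using that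
      by (intro add_mono) (auto intro: member_le_sum)
  qed
  have pos: "0 < a j * k + b j" if "j \<in> {1..N}" for j using assms that by auto
  have "real (multiplicity p (polyf N a b d k)) * ln (real p)
        = (\<Sum>j=1..N. real (d j) * (real (multiplicity p (a j * k + b j)) * ln (real p)))"
    using polyf_mult[OF assms(1,2)] by (simp add: sum_distrib_right mult.assoc)
  also have "\<dots> \<le> (\<Sum>j=1..N. real (d j) * ln (real X))"
    using factor_bound(1)[OF assms(1) pos le] by (intro sum_mono mult_left_mono) auto
  also have "\<dots> = real (\<Sum>j=1..N. d j) * ln (real X)" by (simp add: sum_distrib_right)
  finally show "real (multiplicity p (polyf N a b d k)) * ln (real p) \<le> real (\<Sum>j=1..N. d j) * ln (real X)" .
  assume "X < p^4"
  then have "multiplicity p (polyf N a b d k) \<le> (\<Sum>j=1..N. d j * 3)"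
    unfolding polyf_mult[OF assms(1,2)]
    using factor_bound(2)[OF assms(1) pos le] by (intro sum_mono mult_left_mono) auto
  then show "multiplicity p (polyf N a b d k) \<le> 3 * (\<Sum>j=1..N. d j)"
    by (metis sum_distrib_right mult.commute)
qed


lemma lcm_bound:
  fixes X :: nat
  assumes "prime p" "\<forall>j\<in>{1..N}. b j > 0"
    and X: "X = (\<Sum>j=1..N. a j) * n + (\<Sum>j=1..N. b j)"
  shows "real (multiplicity p (Lcm (polyf N a b d ` {1..n}))) * ln (real p) \<le> real (\<Sum>j=1..N. d j) * ln (real X)"
    and "X < p^4 \<Longrightarrow> multiplicity p (Lcm (polyf N a b d ` {1..n})) \<le> 3 * (\<Sum>j=1..N. d j)"
proof -
  define S where "S = polyf N a b d ` {1..n}"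
  have lnp: "0 \<le> ln (real p)" using prime_ge_1_nat[OF assms(1)] by (intro ln_ge_zero) simp
  have lnX: "0 \<le> ln (real X)"
  proof (cases "X = 0")
    case False then show ?thesis by (simp add: ln_ge_zero_iff)
  qed simp
  have "(multiplicity p (Lcm S) = 0) \<or> (\<exists>k\<in>{1..n}. multiplicity p (Lcm S) \<le> multiplicity p (polyf N a b d k))"
  proof (cases "n = 0")
    case True
    then have "S = {}" unfolding S_def by simp
    then show ?thesis by simp
  next
    case False
    have fin: "finite S" unfolding S_def by simp
    have ne: "S \<noteq> {}" unfolding S_def using False by auto
    have nz: "0 \<notin> S"
    proof
      assume "0 \<in> S"
      then obtain k where "polyf N a b d k = 0"
        unfolding S_def by auto
      then have "\<exists>j\<in>{1..N}. (a j * k + b j) ^ d j = 0"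
        unfolding polyf_def by (simp only: prod_zero_iff finite_atLeastAtMost simp_thms)
      then obtain j where j: "j \<in> {1..N}" "(a j * k + b j) ^ d j = 0" by blast
      have "b j > 0" using assms(2) j(1) by blast
      then show False using j(2) by simp
    qed
    have "multiplicity p (Lcm S) \<le> Max (multiplicity p ` S)"
      using fin nz assms(1) by (intro mult_Lcm_le) auto
    moreover have "Max (multiplicity p ` S) \<in> multiplicity p ` S"
      using fin ne by (intro Max_in) auto
    ultimately show ?thesis unfolding S_def by auto
  qed
  note dis = this
  show "real (multiplicity p (Lcm (polyf N a b d ` {1..n}))) * ln (real p) \<le> real (\<Sum>j=1..N. d j) * ln (real X)"
    using dis
  proof
    assume "multiplicity p (Lcm S) = 0"
    then show ?thesis using lnX unfolding S_def by (simp add: sum_nonneg)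
  next
    assume "\<exists>k\<in>{1..n}. multiplicity p (Lcm S) \<le> multiplicity p (polyf N a b d k)"
    then obtain k where k: "k \<in> {1..n}" "multiplicity p (Lcm S) \<le> multiplicity p (polyf N a b d k)"
      by blast
    have "real (multiplicity p (Lcm S)) * ln (real p) \<le> real (multiplicity p (polyf N a b d k)) * ln (real p)"
      using k lnp by (intro mult_right_mono) auto
    also have "\<dots> \<le> real (\<Sum>j=1..N. d j) * ln (real X)"
      using k by (intro polyf_bound(1)[OF assms(1,2) _ X]) auto
    finally show ?thesis unfolding S_def .
  qed
  assume X4: "X < p^4"
  show "multiplicity p (Lcm (polyf N a b d ` {1..n})) \<le> 3 * (\<Sum>j=1..N. d j)"
    using dis
  proof
    assume "multiplicity p (Lcm S) = 0"
    then show ?thesis unfolding S_def by simp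
  next
    assume "\<exists>k\<in>{1..n}. multiplicity p (Lcm S) \<le> multiplicity p (polyf N a b d k)"
    then obtain k where k: "k \<in> {1..n}" "multiplicity p (Lcm S) \<le> multiplicity p (polyf N a b d k)"
      by blast
    have "multiplicity p (polyf N a b d k) \<le> 3 * (\<Sum>j=1..N. d j)"
      using k X4 by (intro polyf_bound(2)[OF assms(1,2) _ X]) auto
    then show ?thesis using k unfolding S_def by simp
  qed
qed




lemma ln_prime_nonneg: "prime (p::nat) \<Longrightarrow> 0 \<le> ln (real p)"
proof -
  assume "prime p"
  then have "1 \<le> p" by (rule prime_ge_1_nat)
  then show ?thesis by simp
qed

lemma main_bound:
  fixes N :: nat and a b d :: "nat \<Rightarrow> nat"
  assumes "N \<ge> 1"
    and ab: "\<forall>j\<in>{1..N}. a j > 0 \<and> b j > 0 \<and> d j > 0"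
    and n: "n \<ge> 1"
  defines "A \<equiv> (\<Sum>j=1..N. a j)" and "B \<equiv> (\<Sum>j=1..N. b j)" and "D \<equiv> (\<Sum>j=1..N. d j)"
  shows "(\<Sum>p\<in>{p. prime p \<and> real p \<le> Mn N a b n}.
            real (multiplicity p (Lcm (polyf N a b d ` {1..n}))) * ln (real p))
         \<le> (3 * real D * ln 4 + 4 * real D) * sqrt (real (A+B)) * sqrt (real n)"
proof -
  define X where "X = A * n + B"
  define T where "T = (\<lambda>p. real (multiplicity p (Lcm (polyf N a b d ` {1..n}))) * ln (real p))"
  define m where "m = nat \<lfloor>sqrt (real X)\<rfloor>"
  define q where "q = nat \<lfloor>sqrt (sqrt (real X))\<rfloor>"
  define P where "P = {p::nat. prime p \<and> p \<le> m}"
  have Xeq: "X = (\<Sum>j=1..N. a j) * n + (\<Sum>j=1..N. b j)" unfolding X_def A_def B_def ..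
  have bpos: "\<forall>j\<in>{1..N}. b j > 0" using ab by auto
  have Xge: "1 \<le> X"
  proof -
    have "b 1 \<le> B" unfolding B_def using assms(1) by (intro member_le_sum) auto
    then show ?thesis using ab assms(1) unfolding X_def by force
  qed
  have XAB: "X \<le> (A+B) * n" unfolding X_def using n by (simp add: algebra_simps)
  have Mn: "Mn N a b n \<le> sqrt (real X)"
    unfolding Mn_def
  proof (subst Max_le_iff, simp, use assms(1) in force, clarify)
    fix j assume j: "j \<in> {1..N}"
    have "a j \<le> A" unfolding A_def using j by (intro member_le_sum) auto
    then have 1: "a j * n \<le> A * n" by simp
    have 2: "b j \<le> B" unfolding B_def using j by (intro member_le_sum) auto
    have "a j * n + b j \<le> X" unfolding X_def using add_mono[OF 1 2] .
    then show "sqrt (real (a j * n + b j)) \<le> sqrt (real X)"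
      by (intro real_sqrt_le_mono) (simp only: of_nat_le_iff)
  qed
  have sub: "{p. prime p \<and> real p \<le> Mn N a b n} \<subseteq> P"
    unfolding P_def m_def using Mn by (auto intro!: le_nat_floor)
  have Tnn: "0 \<le> T p" if "prime p" for p
    unfolding T_def using ln_prime_nonneg[OF that] by simp
  have "(\<Sum>p\<in>{p. prime p \<and> real p \<le> Mn N a b n}. T p) \<le> (\<Sum>p\<in>P. T p)"
    using sub Tnn by (intro sum_mono2) (auto simp: P_def)
  also have "\<dots> \<le> (\<Sum>p\<in>P. 3 * real D * ln (real p) + (if p^4 \<le> X then real D * ln (real X) else 0))"
  proof (intro sum_mono)
    fix p assume "p \<in> P"
    then have pp: "prime p" unfolding P_def by auto
    have lnp: "0 \<le> ln (real p)" using pp by (rule ln_prime_nonneg)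
    show "T p \<le> 3 * real D * ln (real p) + (if p^4 \<le> X then real D * ln (real X) else 0)"
    proof (cases "p^4 \<le> X")
      case True
      have "T p \<le> real D * ln (real X)" unfolding T_def D_def
        using lcm_bound(1)[OF pp bpos Xeq, where d=d] by simp
      moreover have "0 \<le> 3 * real D * ln (real p)" using lnp by simp
      ultimately show ?thesis using True by simp
    next
      case False
      have "multiplicity p (Lcm (polyf N a b d ` {1..n})) \<le> 3 * D" unfolding D_def
        using lcm_bound(2)[OF pp bpos Xeq, where d=d] False by simp
      then have "real (multiplicity p (Lcm (polyf N a b d ` {1..n}))) \<le> 3 * real D"
        by (metis of_nat_le_iff of_nat_mult of_nat_numeral)
      then have "T p \<le> 3 * real D * ln (real p)" unfolding T_def
        using lnp by (intro mult_right_mono) auto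
      then show ?thesis using False by simp
    qed
  qed
  also have "\<dots> = 3 * real D * (\<Sum>p\<in>P. ln (real p)) + (\<Sum>p\<in>{p\<in>P. p^4 \<le> X}. real D * ln (real X))"
  proof -
    have finP: "finite P" unfolding P_def by simp
    show ?thesis
      by (simp only: sum.distrib sum_distrib_left sum.inter_filter[OF finP])
  qed
  also have "\<dots> \<le> 3 * real D * (real m * ln 4) + (\<Sum>p\<in>{1..q}. real D * ln (real X))"
  proof (intro add_mono mult_left_mono sum_mono2)
    show "(\<Sum>p\<in>P. ln (real p)) \<le> real m * ln 4" unfolding P_def by (rule theta_le)
    show "{p \<in> P. p ^ 4 \<le> X} \<subseteq> {1..q}"
    proof
      fix p assume "p \<in> {p \<in> P. p ^ 4 \<le> X}"
      then have pp: "prime p" and p4: "p^4 \<le> X" unfolding P_def by auto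
      have "real p ^ 4 \<le> real X" using p4 by (metis of_nat_le_iff of_nat_power)
      then have "(real p ^ 2)^2 \<le> real X" by (simp add: power_mult[symmetric])
      then have "real p ^ 2 \<le> sqrt (real X)" by (rule real_le_rsqrt)
      then have "real p \<le> sqrt (sqrt (real X))" by (rule real_le_rsqrt)
      then have "p \<le> q" unfolding q_def by (rule le_nat_floor)
      then show "p \<in> {1..q}" using prime_ge_1_nat[OF pp] by auto
    qed
    show "0 \<le> real D * ln (real X)" using Xge by simp
  qed auto
  also have "\<dots> = 3 * real D * ln 4 * real m + real D * ln (real X) * real q" by simp
  also have "\<dots> \<le> 3 * real D * ln 4 * sqrt (real X) + real D * (4 * sqrt (sqrt (real X))) * sqrt (sqrt (real X))"
  proof -
    have hm: "real m \<le> sqrt (real X)" unfolding m_def using Xge by simp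
    have hq: "real q \<le> sqrt (sqrt (real X))" unfolding q_def using Xge by simp
    have "ln (real X) = 4 * ln (sqrt (sqrt (real X)))" by (simp add: ln_sqrt)
    also have "\<dots> \<le> 4 * sqrt (sqrt (real X))"
      using ln_le_minus_one[of "sqrt (sqrt (real X))"] Xge by simp
    finally have hl: "real D * ln (real X) \<le> real D * (4 * sqrt (sqrt (real X)))"
      by (intro mult_left_mono) auto
    have h1: "3 * real D * ln 4 * real m \<le> 3 * real D * ln 4 * sqrt (real X)"
      using hm by (intro mult_left_mono) auto
    have h2: "real D * ln (real X) * real q \<le> real D * (4 * sqrt (sqrt (real X))) * sqrt (sqrt (real X))"
      by (rule mult_mono[OF hl hq]) auto
    show ?thesis using h1 h2 by (rule add_mono)
  qed
  also have "\<dots> = (3 * real D * ln 4 + 4 * real D) * sqrt (real X)"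
    by (simp add: algebra_simps)
  also have "\<dots> \<le> (3 * real D * ln 4 + 4 * real D) * sqrt (real ((A+B) * n))"
  proof -
    have "real X \<le> real ((A+B) * n)" using XAB by (simp only: of_nat_le_iff)
    then have "sqrt (real X) \<le> sqrt (real ((A+B) * n))" by (rule real_sqrt_le_mono)
    then show ?thesis by (intro mult_left_mono) auto
  qed
  also have "\<dots> = (3 * real D * ln 4 + 4 * real D) * sqrt (real (A+B)) * sqrt (real n)"
    by (simp add: real_sqrt_mult)
  finally show ?thesis unfolding T_def .
qed

theorem mainTheorem5:
  fixes N :: nat and a b d :: "nat \<Rightarrow> nat"
  assumes "N \<ge> 1"
    and "\<forall>j\<in>{1..N}. a j > 0 \<and> b j > 0 \<and> d j > 0"
  shows "(\<lambda>n. \<Sum>p\<in>{p. prime p \<and> real p \<le> Mn N a b n}.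
            real (multiplicity p (Lcm (polyf N a b d ` {1..n}))) * ln (real p))
         \<in> O(\<lambda>n. sqrt (real n))"
proof (rule bigoI)
  define K where "K = (3 * real (\<Sum>j=1..N. d j) * ln 4 + 4 * real (\<Sum>j=1..N. d j)) * sqrt (real ((\<Sum>j=1..N. a j)+(\<Sum>j=1..N. b j)))"
  show "\<forall>\<^sub>F n in at_top. norm (\<Sum>p\<in>{p. prime p \<and> real p \<le> Mn N a b n}.
            real (multiplicity p (Lcm (polyf N a b d ` {1..n}))) * ln (real p))
         \<le> K * norm (sqrt (real n))"
    unfolding eventually_at_top_linorder
  proof (intro exI allI impI)
    fix n :: nat assume n: "n \<ge> 1"
    have nn: "0 \<le> (\<Sum>p\<in>{p. prime p \<and> real p \<le> Mn N a b n}.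
            real (multiplicity p (Lcm (polyf N a b d ` {1..n}))) * ln (real p))"
      by (intro sum_nonneg mult_nonneg_nonneg) (auto intro: ln_prime_nonneg)
    show "norm (\<Sum>p\<in>{p. prime p \<and> real p \<le> Mn N a b n}.
            real (multiplicity p (Lcm (polyf N a b d ` {1..n}))) * ln (real p))
         \<le> K * norm (sqrt (real n))"
      using main_bound[OF assms n] nn unfolding K_def by simp
  qed
qed

end
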